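(* Let $\mathbf{x}_1,\dots,\mathbf{x}_m\in\mathbb{R}^n$ and $y_1,\dots,y_m\in\mathbb{R}$ be such that $y_i=\phi(\mathbf{x}_i)$, $i=1,\dots,m$, for some function $\phi:\mathbb{R}^n\to\mathbb{R}$. Then for every $\varepsilon>0$ there exists a $\mathrm{DLSE}_T$ neural network whose input-output function $d_T$ satisfies $|d_T(\mathbf{x}_i)-y_i|\leqslant\varepsilon$ for $i=1,\dots,m$.
   Context: A $\mathrm{DLSE}_T$ neural network (with temperature $T>0$, $n$ inputs and $K$ hidden nodes in each of its two components, $K$ a positive integer) is specified by vectors $\boldsymbol{\alpha}^{(k)},\boldsymbol{\gamma}^{(k)}\in\mathbb{R}^n$ and reals $\beta_k,\delta_k$, $k=1,\dots,K$, and its input-output function is $$d_T(\mathbf{x})=T\log\Big(\sum_{k=1}^K\exp\big((\langle\boldsymbol{\alpha}^{(k)},\mathbf{x}\rangle+\beta_k)/T\big)\Big)-T\log\Big(\sum_{k=1}^K\exp\big((\langle\boldsymbol{\gamma}^{(k)},\mathbf{x}\rangle+\delta_k)/T\big)\Big),$$ i.e., the difference of two one-hidden-layer networks with hidden activation $s\mapsto\exp(s/T)$, unit weights to the output node, and output activation $s\mapsto T\log s$. *)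

theory Defs
  imports "HOL-Analysis.Analysis"
begin

definition dlse ::
  "real \<Rightarrow> nat \<Rightarrow> (nat \<Rightarrow> real ^ 'n) \<Rightarrow> (nat \<Rightarrow> real) \<Rightarrow>
   (nat \<Rightarrow> real ^ 'n) \<Rightarrow> (nat \<Rightarrow> real) \<Rightarrow> real ^ 'n \<Rightarrow> real" where
  "dlse T K \<alpha> \<beta> \<gamma> \<delta> x =
     T * ln (\<Sum>k=1..K. exp ((\<alpha> k \<bullet> x + \<beta> k) / T))
   - T * ln (\<Sum>k=1..K. exp ((\<gamma> k \<bullet> x + \<delta> k) / T))"

end

theory Submission
  imports Defs
begin

lemma key:
  fixes u w :: "nat \<Rightarrow> real" and I :: "nat set"
  assumes fin: "finite I" and iI: "i \<in> I"
    and upos: "\<And>k. k \<in> I \<Longrightarrow> 0 < u k" and uU: "\<And>k. k \<in> I \<Longrightarrow> u k \<le> U"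
    and uL: "\<And>k. k \<in> I \<Longrightarrow> L \<le> u k" and Lpos: "L > 0"
    and wpos: "\<And>k. k \<in> I \<Longrightarrow> 0 < w k" and wi: "w i = 1"
    and alt: "\<And>k. k \<in> I \<Longrightarrow> u k = u i \<or> w k \<le> \<eta>"
    and cardb: "real (card I) * U * \<eta> \<le> \<delta>" and dL: "\<delta> \<le> L/2"
    and dE: "2*T*\<delta> \<le> \<epsilon>*L" and Tpos: "T > 0" and eta: "\<eta> \<ge> 0"
  shows "\<bar>T*(ln (\<Sum>k\<in>I. u k * w k) - ln (\<Sum>k\<in>I. w k)) - T*ln (u i)\<bar> \<le> \<epsilon>"
proof -
  define N where "N = (\<Sum>k\<in>I. u k * w k)"
  define D where "D = (\<Sum>k\<in>I. w k)"
  have D1: "D \<ge> 1"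
    unfolding D_def using member_le_sum[OF iI, of w] wpos fin wi by (simp add: less_imp_le)
  have Npos: "N > 0" unfolding N_def
    using fin iI upos wpos by (intro sum_pos) auto
  have "N - u i * D = (\<Sum>k\<in>I. (u k - u i) * w k)"
    unfolding N_def D_def by (simp add: sum_subtractf sum_distrib_left algebra_simps)
  also have "\<bar>\<dots>\<bar> \<le> (\<Sum>k\<in>I. \<bar>(u k - u i) * w k\<bar>)" by (rule sum_abs)
  also have "\<dots> \<le> (\<Sum>k\<in>I. U * \<eta>)"
  proof (rule sum_mono)
    fix k assume k: "k \<in> I"
    have U0: "U \<ge> 0" using uU[OF iI] upos[OF iI] by simp
    show "\<bar>(u k - u i) * w k\<bar> \<le> U * \<eta>"
    proof (cases "u k = u i")
      case True then show ?thesis using U0 eta by simp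
    next
      case False
      then have "w k \<le> \<eta>" using alt[OF k] by auto
      moreover have "\<bar>u k - u i\<bar> \<le> U" using uU[OF k] uU[OF iI] upos[OF k] upos[OF iI] by auto
      ultimately show ?thesis using wpos[OF k]
        by (simp add: abs_mult mult_mono)
    qed
  qed
  also have "\<dots> = real (card I) * U * \<eta>" by simp
  finally have b1: "\<bar>N - u i * D\<bar> \<le> \<delta>" using cardb by linarith
  define r where "r = N / D"
  have "\<bar>r - u i\<bar> = \<bar>N - u i * D\<bar> / D" unfolding r_def using D1
    by (simp add: field_simps abs_div)
  also have "\<dots> \<le> \<bar>N - u i * D\<bar>" using D1
    by (simp add: divide_le_eq mult_le_cancel_left1)
  finally have b2: "\<bar>r - u i\<bar> \<le> \<delta>" using b1 by linarith
  have ui: "u i \<ge> L" "u i > 0" using uL[OF iI] upos[OF iI] by auto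
  have rlow: "r \<ge> u i / 2" using b2 dL ui by auto
  have rpos: "r > 0" using rlow ui by linarith
  have up: "ln r - ln (u i) \<le> 2*\<delta>/L"
  proof -
    have "ln r - ln (u i) = ln (r / u i)" using rpos ui by (simp add: ln_div)
    also have "\<dots> \<le> r / u i - 1" using rpos ui by (intro ln_le_minus_one) simp
    also have "\<dots> = (r - u i) / u i" using ui by (simp add: field_simps)
    also have "\<dots> \<le> \<delta> / u i" using b2 ui by (intro divide_right_mono) auto
    also have "\<dots> \<le> \<delta> / L" using ui Lpos b2
      by (intro divide_left_mono) auto
    also have "\<dots> \<le> 2*\<delta>/L" using b2 Lpos by (simp add: divide_right_mono)
    finally show ?thesis .
  qed
  have lo: "ln (u i) - ln r \<le> 2*\<delta>/L"
  proof -
    have "ln (u i) - ln r = ln (u i / r)" using rpos ui by (simp add: ln_div)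
    also have "\<dots> \<le> u i / r - 1" using rpos ui by (intro ln_le_minus_one) simp
    also have "\<dots> = (u i - r) / r" using rpos by (simp add: field_simps)
    also have "\<dots> \<le> \<delta> / r" using b2 rpos by (intro divide_right_mono) auto
    also have "\<dots> \<le> \<delta> / (L/2)" using rlow ui Lpos b2
      by (intro divide_left_mono) auto
    also have "\<dots> = 2*\<delta>/L" by simp
    finally show ?thesis .
  qed
  have lnr: "ln N - ln D = ln r" unfolding r_def using Npos D1 by (simp add: ln_div)
  have "\<bar>ln r - ln (u i)\<bar> \<le> 2*\<delta>/L" using up lo by auto
  then have "T * \<bar>ln r - ln (u i)\<bar> \<le> T * (2*\<delta>/L)" using Tpos by (intro mult_left_mono) auto
  also have "\<dots> \<le> \<epsilon>" using dE Lpos by (simp add: field_simps)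
  finally show ?thesis unfolding N_def[symmetric] D_def[symmetric] lnr
    using Tpos by (simp add: abs_mult right_diff_distrib[symmetric])
qed


lemma exp_split:
  fixes a b :: "real ^ 'n"
  assumes "T > 0"
  shows "exp ((((2*c) *\<^sub>R b) \<bullet> a + (yk - c * (b \<bullet> b))) / T)
     = exp (c * (a \<bullet> a) / T) * (exp (yk / T) * exp (- c * (norm (a - b))\<^sup>2 / T))"
proof -
  have n: "(norm (a - b))\<^sup>2 = a \<bullet> a - 2 * (a \<bullet> b) + b \<bullet> b"
    by (simp add: power2_norm_eq_inner inner_diff_left inner_diff_right inner_commute)
  have "(((2*c) *\<^sub>R b) \<bullet> a + (yk - c * (b \<bullet> b))) / T
      = c * (a \<bullet> a) / T + (yk / T + (- c * (norm (a - b))\<^sup>2 / T))"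
    unfolding n using assms by (simp add: field_simps inner_commute)
  then show ?thesis by (metis exp_add)
qed

lemma exp_split0:
  fixes a b :: "real ^ 'n"
  assumes "T > 0"
  shows "exp ((((2*c) *\<^sub>R b) \<bullet> a + (- c * (b \<bullet> b))) / T)
     = exp (c * (a \<bullet> a) / T) * exp (- c * (norm (a - b))\<^sup>2 / T)"
  using exp_split[OF assms, where yk=0 and c=c and a=a and b=b] by simp

theorem theorem4:
  fixes x :: "nat \<Rightarrow> real ^ 'n" and y :: "nat \<Rightarrow> real" and m :: nat
    and \<phi> :: "real ^ 'n \<Rightarrow> real" and T \<epsilon> :: real
  assumes "\<And>i. i \<in> {1..m} \<Longrightarrow> y i = \<phi> (x i)"
    and "T > 0" and "\<epsilon> > 0"
  shows "\<exists>K::nat. K \<ge> 1 \<and> (\<exists>\<alpha> \<beta> \<gamma> \<delta>.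
           \<forall>i \<in> {1..m}. \<bar>dlse T K \<alpha> \<beta> \<gamma> \<delta> (x i) - y i\<bar> \<le> \<epsilon>)"
proof (cases "m = 0")
  case True then show ?thesis by (intro exI[of _ 1]) auto
next
  case False
  note yphi = assms(1) and Tpos = assms(2) and epos = assms(3)
  define I where "I = {1..m}"
  have fin: "finite I" and cardI: "card I = m" unfolding I_def by auto
  define U where "U = (\<Sum>k\<in>I. exp (y k / T))"
  define L where "L = exp (- (\<Sum>k\<in>I. \<bar>y k\<bar>) / T)"
  have Lpos: "L > 0" unfolding L_def by simp
  have uU: "exp (y k / T) \<le> U" if "k \<in> I" for k
    unfolding U_def by (rule member_le_sum[OF that]) (auto simp: fin)
  have uL: "L \<le> exp (y k / T)" if "k \<in> I" for k
  proof -
    have "\<bar>y k\<bar> \<le> (\<Sum>k\<in>I. \<bar>y k\<bar>)" by (rule member_le_sum[OF that]) (auto simp: fin)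
    then have "- (\<Sum>k\<in>I. \<bar>y k\<bar>) / T \<le> y k / T" using Tpos by (intro divide_right_mono) auto
    then show ?thesis unfolding L_def by simp
  qed
  have Upos: "U > 0" unfolding U_def using fin False by (intro sum_pos) (auto simp: I_def)
  define d where "d = min (L/2) (\<epsilon>*L/(2*T))"
  have dpos: "d > 0" using Lpos epos Tpos by (simp add: d_def)
  have dL: "d \<le> L/2" and dE: "2*T*d \<le> \<epsilon>*L" using Tpos unfolding d_def
    by (auto simp: min_def field_simps)
  define \<eta> where "\<eta> = d / (real m * U)"
  have etapos: "\<eta> > 0" using dpos Upos False by (simp add: \<eta>_def)
  have cardb: "real (card I) * U * \<eta> \<le> d" using False Upos
    by (simp add: cardI \<eta>_def)
  define c where "c = (\<Sum>i\<in>I. \<Sum>k\<in>I. T * \<bar>ln \<eta>\<bar> / (norm (x i - x k))\<^sup>2)"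
  have cge: "T * \<bar>ln \<eta>\<bar> / (norm (x i - x k))\<^sup>2 \<le> c" if "i \<in> I" "k \<in> I" for i k
  proof -
    have "T * \<bar>ln \<eta>\<bar> / (norm (x i - x k))\<^sup>2 \<le> (\<Sum>k\<in>I. T * \<bar>ln \<eta>\<bar> / (norm (x i - x k))\<^sup>2)"
      by (rule member_le_sum[OF that(2)]) (use fin Tpos in auto)
    also have "\<dots> \<le> c" unfolding c_def
      by (rule member_le_sum[OF that(1), where f = "\<lambda>i. \<Sum>k\<in>I. T * \<bar>ln \<eta>\<bar> / (norm (x i - x k))\<^sup>2"])
        (use fin Tpos in \<open>auto intro!: sum_nonneg\<close>)
    finally show ?thesis .
  qed
  define \<alpha> where "\<alpha> = (\<lambda>k. (2*c) *\<^sub>R x k)"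
  define \<beta> where "\<beta> = (\<lambda>k. y k - c * (x k \<bullet> x k))"
  define \<delta> where "\<delta> = (\<lambda>k. - c * (x k \<bullet> x k))"
  have m1: "1 \<le> m" using False by simp
  show ?thesis
  proof (rule exI[of _ m], rule conjI[OF m1], rule exI[of _ \<alpha>], rule exI[of _ \<beta>], rule exI[of _ \<alpha>], rule exI[of _ \<delta>], intro ballI)
    fix i assume iI0: "i \<in> {1..m}"
    then have iI: "i \<in> I" unfolding I_def .
    define u where "u = (\<lambda>k. exp (y k / T))"
    define w where "w = (\<lambda>k. exp (- c * (norm (x i - x k))\<^sup>2 / T))"
    define E where "E = exp (c * (x i \<bullet> x i) / T)"
    have s1: "(\<Sum>k=1..m. exp ((\<alpha> k \<bullet> x i + \<beta> k) / T)) = E * (\<Sum>k\<in>I. u k * w k)"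
      unfolding \<alpha>_def \<beta>_def E_def u_def w_def I_def exp_split[OF Tpos]
      by (simp add: sum_distrib_left)
    have s2: "(\<Sum>k=1..m. exp ((\<alpha> k \<bullet> x i + \<delta> k) / T)) = E * (\<Sum>k\<in>I. w k)"
      unfolding \<alpha>_def \<delta>_def E_def w_def I_def exp_split0[OF Tpos]
      by (simp add: sum_distrib_left)
    have Np: "(\<Sum>k\<in>I. u k * w k) > 0" using fin iI
      by (intro sum_pos) (auto simp: u_def w_def)
    have Dp: "(\<Sum>k\<in>I. w k) > 0" using fin iI
      by (intro sum_pos) (auto simp: w_def)
    have Ep: "E > 0" by (simp add: E_def)
    have eqd: "dlse T m \<alpha> \<beta> \<alpha> \<delta> (x i) = T*(ln (\<Sum>k\<in>I. u k * w k) - ln (\<Sum>k\<in>I. w k))"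
      unfolding dlse_def s1 s2 using Np Dp Ep by (simp add: ln_mult algebra_simps)
    have yi: "y i = T * ln (u i)" using Tpos by (simp add: u_def)
    have alt: "u k = u i \<or> w k \<le> \<eta>" if k: "k \<in> I" for k
    proof (cases "x k = x i")
      case True
      then have "y k = y i" using yphi k iI by (simp add: I_def)
      then show ?thesis by (simp add: u_def)
    next
      case False
      then have np: "(norm (x i - x k))\<^sup>2 > 0" by simp
      have "T * \<bar>ln \<eta>\<bar> / (norm (x i - x k))\<^sup>2 \<le> c" using cge[OF iI k] .
      then have "T * \<bar>ln \<eta>\<bar> \<le> c * (norm (x i - x k))\<^sup>2" using np by (simp add: divide_le_eq)
      then have "- ln \<eta> * T \<le> c * (norm (x i - x k))\<^sup>2" using Tpos
        by (smt (verit) mult.commute mult_left_mono abs_ge_self)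
      then have "- ln \<eta> \<le> c * (norm (x i - x k))\<^sup>2 / T" using Tpos
        by (simp add: le_divide_eq)
      then have "- c * (norm (x i - x k))\<^sup>2 / T \<le> ln \<eta>" by simp
      then have "w k \<le> exp (ln \<eta>)" unfolding w_def by simp
      then show ?thesis using etapos by simp
    qed
    have "\<bar>T*(ln (\<Sum>k\<in>I. u k * w k) - ln (\<Sum>k\<in>I. w k)) - T*ln (u i)\<bar> \<le> \<epsilon>"
      by (rule key[where u=u and w=w and U=U and \<eta>=\<eta>, OF fin iI _ _ _ Lpos _ _ alt cardb dL dE Tpos])
        (use uU uL etapos in \<open>auto simp: u_def w_def\<close>)
    then show "\<bar>dlse T m \<alpha> \<beta> \<alpha> \<delta> (x i) - y i\<bar> \<le> \<epsilon>" using eqd yi by metis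
  qed
qed

end
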